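(* Let $p$ be an odd prime, $m,r$ positive integers and $k\in\{0,1,\dots,mp^r\}$. Then $$k\binom{2k}{k}\binom{2(mp^r-k)}{mp^r-k}\equiv0\pmod{p^r}.$$ *)

theory Defs
  imports Main "HOL-Computational_Algebra.Primes" "HOL-Number_Theory.Cong"
begin

end

theory Submission
  imports Defs
begin

lemma Suc_div_step:
  fixes n q :: nat assumes "q > 0"
  shows "Suc n div q = n div q + (if q dvd Suc n then 1 else 0)"
using assms by (simp add: div_Suc dvd_eq_mod_eq_0)

lemma mult_card:
  fixes p x N :: nat assumes "prime p" "x > 0" "x < p ^ N"
  shows "multiplicity p x = card {j\<in>{1..N}. p ^ j dvd x}"
proof -
  have nu: "\<not> is_unit p" using assms(1) by (metis not_prime_unit)
  have le: "multiplicity p x \<le> N"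
  proof (rule ccontr)
    assume "\<not> ?thesis"
    hence "p ^ N dvd x" using power_dvd_iff_le_multiplicity[OF _ nu, of x N] assms by simp
    hence "p ^ N \<le> x" using assms by (simp add: dvd_imp_le)
    thus False using assms by simp
  qed
  have "{j\<in>{1..N}. p ^ j dvd x} = {1..multiplicity p x}"
    using power_dvd_iff_le_multiplicity[OF _ nu, of x] assms le by auto
  thus ?thesis by simp
qed

lemma legendre:
  fixes p n N :: nat assumes "prime p"
  shows "n < p ^ N \<Longrightarrow> multiplicity p (fact n) = (\<Sum>j\<in>{1..N}. n div p ^ j)"
proof (induction n)
  case 0
  then show ?case by simp
next
  case (Suc n)
  have pp: "p > 0" using assms prime_gt_0_nat by blast
  have "multiplicity p (fact (Suc n) :: nat) = multiplicity p (Suc n * fact n)"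
    by (simp add: fact_Suc)
  also have "\<dots> = multiplicity p (Suc n) + multiplicity p (fact n :: nat)"
    by (rule prime_elem_multiplicity_mult_distrib) (use assms in auto)
  also have "multiplicity p (fact n :: nat) = (\<Sum>j\<in>{1..N}. n div p ^ j)" using Suc by simp
  also have "multiplicity p (Suc n) = card {j\<in>{1..N}. p ^ j dvd Suc n}"
    using mult_card[OF assms, of "Suc n" N] Suc.prems by simp
  also have "\<dots> = (\<Sum>j\<in>{1..N}. if p ^ j dvd Suc n then 1 else 0)"
  proof -
    have "{j\<in>{1..N}. p ^ j dvd Suc n} = {1..N} \<inter> {j. p ^ j dvd Suc n}" by auto
    thus ?thesis by (simp add: sum.If_cases)
  qed
  also have "\<dots> + (\<Sum>j\<in>{1..N}. n div p ^ j) = (\<Sum>j\<in>{1..N}. Suc n div p ^ j)"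
    by (subst sum.distrib[symmetric], rule sum.cong) (use Suc_div_step pp in auto)
  finally show ?case .
qed

lemma central_binom_mult:
  fixes p k N :: nat assumes "prime p" "2 * k < p ^ N"
  shows "multiplicity p ((2*k) choose k) = (\<Sum>j\<in>{1..N}. (2 * (k mod p ^ j)) div p ^ j)"
proof -
  have pp: "p > 0" using assms prime_gt_0_nat by blast
  have "fact (2*k) = ((2*k) choose k) * (fact k * (fact k :: nat))"
    using binomial_fact_lemma[of k "2*k"] by (simp add: mult_2 algebra_simps)
  hence "multiplicity p (fact (2*k) :: nat) = multiplicity p ((2*k) choose k) + (multiplicity p (fact k :: nat) + multiplicity p (fact k :: nat))"
    using assms(1) by (simp add: prime_elem_multiplicity_mult_distrib)
  moreover have "multiplicity p (fact (2*k) :: nat) = (\<Sum>j\<in>{1..N}. (2*k) div p ^ j)"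
    using legendre[OF assms(1) assms(2)] .
  moreover have "multiplicity p (fact k :: nat) = (\<Sum>j\<in>{1..N}. k div p ^ j)"
    using legendre[OF assms(1)] assms(2) by simp
  moreover have "(\<Sum>j\<in>{1..N}. (2*k) div p ^ j) = (\<Sum>j\<in>{1..N}. k div p ^ j) + (\<Sum>j\<in>{1..N}. k div p ^ j) + (\<Sum>j\<in>{1..N}. (2 * (k mod p ^ j)) div p ^ j)"
  proof -
    have "(2*k) div p ^ j = k div p ^ j + k div p ^ j + (2 * (k mod p ^ j)) div p ^ j" for j
    proof -
      have "2*k = 2 * (k mod p^j) + (2 * (k div p^j)) * p^j" using div_mult_mod_eq[of k "p^j"] by linarith
      hence "(2*k) div p ^ j = (2 * (k mod p^j)) div p^j + 2 * (k div p^j)"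
        using pp by simp
      thus ?thesis by simp
    qed
    thus ?thesis by (simp add: sum.distrib)
  qed
  ultimately show ?thesis by linarith
qed

theorem lemma2p12:
  fixes p m r k :: nat
  assumes "prime p" and "odd p" and "m > 0" and "r > 0" and "k \<le> m * p ^ r"
  shows "[k * ((2 * k) choose k) * ((2 * (m * p ^ r - k)) choose (m * p ^ r - k)) = 0] (mod p ^ r)"
proof (cases "k = 0")
  case True thus ?thesis by simp
next
  case False
  define n where "n = m * p ^ r"
  define l where "l = n - k"
  define N where "N = 2 * n + 1"
  have p1: "p > 1" using assms(1) prime_gt_1_nat by blast
  have nu: "\<not> is_unit p" using p1 by simp
  have "r < 2 ^ r" by (rule less_exp)
  also have "2 ^ r \<le> p ^ r" using p1 by (simp add: power_mono)
  also have "p ^ r \<le> n" using assms(3) by (simp add: n_def)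
  finally have rn: "r < n" .
  have "N < 2 ^ N" by (rule less_exp)
  also have "2 ^ N \<le> p ^ N" using p1 by (simp add: power_mono)
  finally have NpN: "2 * n < p ^ N" unfolding N_def by simp
  have kn: "k \<le> n" using assms(5) n_def by simp
  have kl: "k + l = n" using kn l_def by simp
  have rN: "r \<le> N" using rn N_def by simp
  define f where "f j = (2 * (k mod p ^ j)) div p ^ j" for j
  define g where "g j = (2 * (l mod p ^ j)) div p ^ j" for j
  have v1: "multiplicity p ((2*k) choose k) = (\<Sum>j\<in>{1..N}. f j)"
    unfolding f_def by (rule central_binom_mult[OF assms(1)]) (use NpN kn in simp)
  have v2: "multiplicity p ((2*l) choose l) = (\<Sum>j\<in>{1..N}. g j)"
    unfolding g_def by (rule central_binom_mult[OF assms(1)]) (use NpN kl in simp)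
  have vk: "multiplicity p k = card {j\<in>{1..N}. p ^ j dvd k}"
    using mult_card[OF assms(1), of k N] False NpN kn by simp
  have "(\<Sum>j\<in>{1..r}. (if p ^ j dvd k then 1 else 0)::nat) = card {j\<in>{1..r}. p ^ j dvd k}"
  proof -
    have "{j\<in>{1..r}. p ^ j dvd k} = {1..r} \<inter> {j. p ^ j dvd k}" by auto
    thus ?thesis by (simp add: sum.If_cases)
  qed
  also have "\<dots> \<le> card {j\<in>{1..N}. p ^ j dvd k}"
    by (rule card_mono) (use rN in auto)
  finally have s0: "(\<Sum>j\<in>{1..r}. (if p ^ j dvd k then 1 else 0)::nat) \<le> multiplicity p k"
    using vk by simp
  have s1: "(\<Sum>j\<in>{1..r}. f j) \<le> (\<Sum>j\<in>{1..N}. f j)"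
    by (rule sum_mono2) (use rN in auto)
  have s2: "(\<Sum>j\<in>{1..r}. g j) \<le> (\<Sum>j\<in>{1..N}. g j)"
    by (rule sum_mono2) (use rN in auto)
  have pw: "1 \<le> (if p ^ j dvd k then 1 else 0) + f j + g j" if j: "j \<in> {1..r}" for j
  proof (cases "p ^ j dvd k")
    case True thus ?thesis by simp
  next
    case nd: False
    define q where "q = p ^ j"
    have q0: "q > 0" using p1 q_def by simp
    have qn: "q dvd n" unfolding q_def n_def using j by (simp add: le_imp_power_dvd)
    have qodd: "odd q" using assms(2) q_def by simp
    define a where "a = k mod q"
    define b where "b = l mod q"
    have a0: "a > 0" using nd a_def q_def by (simp add: dvd_eq_mod_eq_0)
    have aq: "a < q" "b < q" using q0 a_def b_def by auto
    have "(a + b) mod q = n mod q" unfolding a_def b_def using kl by (metis mod_add_eq)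
    hence "(a + b) mod q = 0" using qn by simp
    hence "a + b = q"
    proof (cases "a + b < q")
      case True thus ?thesis using \<open>(a + b) mod q = 0\<close> a0 by simp
    next
      case False
      hence "(a + b) mod q = (a + b - q) mod q" by (simp add: le_mod_geq)
      also have "\<dots> = a + b - q" using aq by simp
      finally show ?thesis using \<open>(a + b) mod q = 0\<close> False by simp
    qed
    hence "2 * a \<ge> q \<or> 2 * b \<ge> q" by linarith
    hence "0 < f j \<or> 0 < g j"
      unfolding f_def g_def a_def[symmetric] b_def[symmetric] q_def[symmetric]
      using q0 by (auto simp: div_greater_zero_iff)
    thus ?thesis by auto
  qed
  have "r = (\<Sum>j\<in>{1..r}. (1::nat))" by simp
  also have "\<dots> \<le> (\<Sum>j\<in>{1..r}. (if p ^ j dvd k then 1 else 0) + f j + g j)"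
    by (rule sum_mono) (use pw in auto)
  also have "\<dots> = (\<Sum>j\<in>{1..r}. (if p ^ j dvd k then 1 else 0)::nat) + (\<Sum>j\<in>{1..r}. f j) + (\<Sum>j\<in>{1..r}. g j)"
    by (simp add: sum.distrib)
  also have "\<dots> \<le> multiplicity p k + multiplicity p ((2*k) choose k) + multiplicity p ((2*l) choose l)"
    using s0 s1 s2 v1 v2 by linarith
  also have "\<dots> = multiplicity p (k * ((2*k) choose k) * ((2*l) choose l))"
    using assms(1) False by (simp add: prime_elem_multiplicity_mult_distrib)
  finally have "r \<le> multiplicity p (k * ((2*k) choose k) * ((2*l) choose l))" .
  hence "p ^ r dvd k * ((2*k) choose k) * ((2*l) choose l)"
    by (rule multiplicity_dvd')
  thus ?thesis unfolding l_def n_def by (simp add: cong_0_iff)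
qed

end
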